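(* Suppose the Lipschitz assumption holds. Then for every $t\in\mathbb N_T$ there exists a constant $K^5_t>0$ such that for all $m_t\in\mathcal M_n$ and $z_t\in\Delta(\mathcal X)$, $$|V_t(m_t)-\hat V_t(z_t)|\le K^5_t\|m_t-z_t\|_\infty+\mathcal O(1/\sqrt n).$$
   Context: Fix $n\in\mathbb N$ agents, $T\in\mathbb N$, finite sets $\mathcal X,\mathcal U,\mathcal W$; $\mathbb N_k=\{1,\dots,k\}$; $\mathcal I(\mathcal X)=[0,1]^{\mathcal X}$; $\Delta(\mathcal X)$ the probability vectors on $\mathcal X$; $\mathcal M_n=\{m\in\Delta(\mathcal X):m(x)\in\{0,\tfrac1n,\dots,1\}\}$. Agent $i\in\mathbb N_n$ has state $x^i_t\in\mathcal X$ and action $u^i_t\in\mathcal U$; mean-field $m_t(x)=\frac1n\sum_i\mathbb 1(x^i_t=x)$; dynamics $x^i_{t+1}=f_t(x^i_t,u^i_t,w^i_t,m_t)$ with $f_t:\mathcal X\times\mathcal U\times\mathcal W\times\mathcal I(\mathcal X)\to\mathcal X$; for each $t$ the noises $w^1_t,\dots,w^n_t$ are i.i.d. with law $\mathbb P(w_t=\cdot)$, independent of everything up to time $t$. $\mathbb P(y|x,u,z)=\sum_w\mathbb 1(f_t(x,u,w,z)=y)\mathbb P(w_t=w)$; costs $\ell_t:\mathcal X\times\mathcal U\times\mathcal I(\mathcal X)\to\mathbb R_{\ge0}$. Lipschitz assumption: constants $K^1_t,K^2_t>0$ with $|\mathbb P(y|x,u,z_1)-\mathbb P(y|x,u,z_2)|\le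 K^1_t\|z_1-z_2\|_\infty$, $|\ell_t(x,u,z_1)-\ell_t(x,u,z_2)|\le K^2_t\|z_1-z_2\|_\infty$ for all $x,y,u$, $z_1,z_2\in\mathcal I(\mathcal X)$. $\mathcal G$ is the set of maps $\gamma:\mathcal X\to\mathcal U$; $\hat f_t(z,\gamma)(y)=\sum_x z(x)\mathbb P(y|x,\gamma(x),z)$; $\hat c_t(z,\gamma)=\sum_x z(x)\ell_t(x,\gamma(x),z)$. Deterministic value functions $\hat V_t:\Delta(\mathcal X)\to\mathbb R$: $\hat V_{T+1}\equiv0$, $\hat V_t(z)=\min_{\gamma\in\mathcal G}\big(\hat c_t(z,\gamma)+\hat V_{t+1}(\hat f_t(z,\gamma))\big)$. Mean-field sharing value functions $V_t:\mathcal M_n\to\mathbb R$: $V_{T+1}\equiv0$, $V_t(m)=\min_{\gamma\in\mathcal G}\big(\hat c_t(m,\gamma)+\mathbb E[V_{t+1}(m_{t+1})\mid m_t=m,\gamma_t=\gamma]\big)$, where the conditional expectation is with respect to the law of the empirical distribution $m_{t+1}$ at time $t+1$ when the empirical distribution at time $t$ is $m$ and every agent uses $u^i_t=\gamma(x^i_t)$. Model data do not depend on $n$; $\mathcal O(1/\sqrt n)$ denotes a quantity bounded by $C/\sqrt n$ with $C$ independent of $n$, $m_t$, $z_t$. *)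

theory Defs
  imports "HOL-Analysis.Analysis"
begin

text \<open>Model: states 'x, actions 'u, noises 'w are finite types. Times are natural numbers.
  Model data: dynamics f, noise laws pw (pw t w = P(w_t = w)), costs ell.\<close>

definition Ispace :: "('x::finite \<Rightarrow> real) set" where
  "Ispace = {z. \<forall>x. 0 \<le> z x \<and> z x \<le> 1}"

definition Delta :: "('x::finite \<Rightarrow> real) set" where
  "Delta = {z. (\<forall>x. 0 \<le> z x) \<and> sum z UNIV = 1}"

definition Mn :: "nat \<Rightarrow> ('x::finite \<Rightarrow> real) set" where
  "Mn n = {m. m \<in> Delta \<and> (\<forall>x. \<exists>k::nat. k \<le> n \<and> m x = real k / real n)}"

definition supn :: "('x::finite \<Rightarrow> real) \<Rightarrow> real" where
  "supn z = Max (range (\<lambda>x. \<bar>z x\<bar>))"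

definition emp :: "nat \<Rightarrow> (nat \<Rightarrow> 'x::finite) \<Rightarrow> ('x \<Rightarrow> real)" where
  "emp n s = (\<lambda>x. real (card {i\<in>{0..<n}. s i = x}) / real n)"

definition Ptrans ::
  "(nat \<Rightarrow> 'x::finite \<Rightarrow> 'u \<Rightarrow> 'w::finite \<Rightarrow> ('x \<Rightarrow> real) \<Rightarrow> 'x) \<Rightarrow> (nat \<Rightarrow> 'w \<Rightarrow> real)
    \<Rightarrow> nat \<Rightarrow> 'x \<Rightarrow> 'u \<Rightarrow> ('x \<Rightarrow> real) \<Rightarrow> 'x \<Rightarrow> real" where
  "Ptrans f pw t x u z y = (\<Sum>w\<in>UNIV. (if f t x u w z = y then 1 else 0) * pw t w)"

definition fhat ::
  "(nat \<Rightarrow> 'x::finite \<Rightarrow> 'u \<Rightarrow> 'w::finite \<Rightarrow> ('x \<Rightarrow> real) \<Rightarrow> 'x) \<Rightarrow> (nat \<Rightarrow> 'w \<Rightarrow> real)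
    \<Rightarrow> nat \<Rightarrow> ('x \<Rightarrow> real) \<Rightarrow> ('x \<Rightarrow> 'u) \<Rightarrow> ('x \<Rightarrow> real)" where
  "fhat f pw t z \<gamma> = (\<lambda>y. \<Sum>x\<in>UNIV. z x * Ptrans f pw t x (\<gamma> x) z y)"

definition chat ::
  "(nat \<Rightarrow> 'x::finite \<Rightarrow> 'u \<Rightarrow> ('x \<Rightarrow> real) \<Rightarrow> real) \<Rightarrow> nat \<Rightarrow> ('x \<Rightarrow> real) \<Rightarrow> ('x \<Rightarrow> 'u) \<Rightarrow> real" where
  "chat ell t z \<gamma> = (\<Sum>x\<in>UNIV. z x * ell t x (\<gamma> x) z)"

fun VhatR ::
  "(nat \<Rightarrow> 'x::finite \<Rightarrow> 'u::finite \<Rightarrow> 'w::finite \<Rightarrow> ('x \<Rightarrow> real) \<Rightarrow> 'x) \<Rightarrow> (nat \<Rightarrow> 'w \<Rightarrow> real)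
    \<Rightarrow> (nat \<Rightarrow> 'x \<Rightarrow> 'u \<Rightarrow> ('x \<Rightarrow> real) \<Rightarrow> real) \<Rightarrow> nat \<Rightarrow> nat \<Rightarrow> ('x \<Rightarrow> real) \<Rightarrow> real" where
  "VhatR f pw ell 0 t z = 0"
| "VhatR f pw ell (Suc k) t z =
     Min (range (\<lambda>\<gamma>. chat ell t z \<gamma> + VhatR f pw ell k (Suc t) (fhat f pw t z \<gamma>)))"

text \<open>hat V_t for horizon T: hat V_{T+1} = 0, and T+1-t stages remain at time t \<le> T.\<close>
definition Vhat ::
  "(nat \<Rightarrow> 'x::finite \<Rightarrow> 'u::finite \<Rightarrow> 'w::finite \<Rightarrow> ('x \<Rightarrow> real) \<Rightarrow> 'x) \<Rightarrow> (nat \<Rightarrow> 'w \<Rightarrow> real)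
    \<Rightarrow> (nat \<Rightarrow> 'x \<Rightarrow> 'u \<Rightarrow> ('x \<Rightarrow> real) \<Rightarrow> real) \<Rightarrow> nat \<Rightarrow> nat \<Rightarrow> ('x \<Rightarrow> real) \<Rightarrow> real" where
  "Vhat f pw ell T t z = VhatR f pw ell (Suc T - t) t z"

text \<open>A labelling of the n agents' states realising the empirical distribution m
  (the law of m_{t+1} does not depend on which one, by exchangeability).\<close>
definition states_of :: "nat \<Rightarrow> ('x::finite \<Rightarrow> real) \<Rightarrow> (nat \<Rightarrow> 'x)" where
  "states_of n m = (SOME s. emp n s = m)"

text \<open>E[ g(m_{t+1}) | m_t = m, gamma_t = gamma ] for n agents: i.i.d. noises w^1..w^n with law pw t,
  x^i_{t+1} = f t x^i (gamma x^i) w^i m.\<close>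
definition Enext ::
  "(nat \<Rightarrow> 'x::finite \<Rightarrow> 'u \<Rightarrow> 'w::finite \<Rightarrow> ('x \<Rightarrow> real) \<Rightarrow> 'x) \<Rightarrow> (nat \<Rightarrow> 'w \<Rightarrow> real)
    \<Rightarrow> nat \<Rightarrow> nat \<Rightarrow> ('x \<Rightarrow> real) \<Rightarrow> ('x \<Rightarrow> 'u) \<Rightarrow> (('x \<Rightarrow> real) \<Rightarrow> real) \<Rightarrow> real" where
  "Enext f pw n t m \<gamma> g =
     (let s = states_of n m in
      \<Sum>w\<in>({0..<n} \<rightarrow>\<^sub>E (UNIV::'w set)).
        (\<Prod>i\<in>{0..<n}. pw t (w i)) * g (emp n (\<lambda>i. f t (s i) (\<gamma> (s i)) (w i) m)))"

fun VR ::
  "(nat \<Rightarrow> 'x::finite \<Rightarrow> 'u::finite \<Rightarrow> 'w::finite \<Rightarrow> ('x \<Rightarrow> real) \<Rightarrow> 'x) \<Rightarrow> (nat \<Rightarrow> 'w \<Rightarrow> real)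
    \<Rightarrow> (nat \<Rightarrow> 'x \<Rightarrow> 'u \<Rightarrow> ('x \<Rightarrow> real) \<Rightarrow> real) \<Rightarrow> nat \<Rightarrow> nat \<Rightarrow> nat \<Rightarrow> ('x \<Rightarrow> real) \<Rightarrow> real" where
  "VR f pw ell n 0 t m = 0"
| "VR f pw ell n (Suc k) t m =
     Min (range (\<lambda>\<gamma>. chat ell t m \<gamma> + Enext f pw n t m \<gamma> (VR f pw ell n k (Suc t))))"

definition Vmf ::
  "(nat \<Rightarrow> 'x::finite \<Rightarrow> 'u::finite \<Rightarrow> 'w::finite \<Rightarrow> ('x \<Rightarrow> real) \<Rightarrow> 'x) \<Rightarrow> (nat \<Rightarrow> 'w \<Rightarrow> real)
    \<Rightarrow> (nat \<Rightarrow> 'x \<Rightarrow> 'u \<Rightarrow> ('x \<Rightarrow> real) \<Rightarrow> real) \<Rightarrow> nat \<Rightarrow> nat \<Rightarrow> nat \<Rightarrow> ('x \<Rightarrow> real) \<Rightarrow> real" where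
  "Vmf f pw ell T n t m = VR f pw ell n (Suc T - t) t m"

end

theory Submission
  imports Defs
begin


lemma supn_ge: "\<bar>z x\<bar> \<le> supn z" unfolding supn_def by (rule Max_ge) auto
lemma supn_nonneg: "0 \<le> supn z" using supn_ge[of z undefined] by linarith
lemma supn_le: "(\<And>x. \<bar>z x\<bar> \<le> c) \<Longrightarrow> supn z \<le> c" unfolding supn_def by (subst Max_le_iff) auto
lemma supn_le_sum: "supn z \<le> (\<Sum>x\<in>UNIV. \<bar>z x\<bar>)"
  by (rule supn_le, rule member_le_sum) auto

lemma Delta_Ispace: "z \<in> Delta \<Longrightarrow> z \<in> Ispace"
  unfolding Delta_def Ispace_def
proof safe
  fix x assume "\<forall>x. 0 \<le> z x" "sum z UNIV = 1"
  then show "z x \<le> 1" using member_le_sum[of x UNIV z] by auto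
qed auto

lemma Mn_Delta: "m \<in> Mn n \<Longrightarrow> m \<in> Delta" unfolding Mn_def by auto

lemma Min_range_diff:
  fixes F G :: "'a::finite \<Rightarrow> real"
  assumes "\<And>g. \<bar>F g - G g\<bar> \<le> e"
  shows "\<bar>Min (range F) - Min (range G)\<bar> \<le> e"
proof -
  have "Min (range F) \<in> range F" by (rule Min_in) auto
  then obtain g0 where g0: "Min (range F) = F g0" by (metis rangeE)
  have "Min (range G) \<in> range G" by (rule Min_in) auto
  then obtain g1 where g1: "Min (range G) = G g1" by (metis rangeE)
  have "Min (range G) \<le> G g0" by (rule Min_le) auto
  moreover have "Min (range F) \<le> F g1" by (rule Min_le) auto
  ultimately show ?thesis using assms[of g0] assms[of g1] g0 g1 by linarith
qed



definition EE :: "('w::finite \<Rightarrow> real) \<Rightarrow> nat set \<Rightarrow> ((nat \<Rightarrow> 'w) \<Rightarrow> real) \<Rightarrow> real" where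
  "EE p I g = (\<Sum>w\<in>PiE I (\<lambda>_. UNIV). (\<Prod>i\<in>I. p (w i)) * g w)"

lemma EE_prod:
  assumes "finite I"
  shows "EE p I (\<lambda>w. \<Prod>i\<in>I. h i (w i)) = (\<Prod>i\<in>I. \<Sum>v\<in>UNIV. p v * h i v)"
proof -
  have "(\<Prod>i\<in>I. \<Sum>v\<in>UNIV. p v * h i v) = (\<Sum>w\<in>PiE I (\<lambda>_. UNIV). \<Prod>i\<in>I. p (w i) * h i (w i))"
    by (rule prod_sum_PiE) (use assms in auto)
  also have "\<dots> = EE p I (\<lambda>w. \<Prod>i\<in>I. h i (w i))"
    unfolding EE_def by (simp add: prod.distrib)
  finally show ?thesis by simp
qed

lemma EE_one:
  assumes "finite I" "sum p UNIV = 1"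
  shows "EE p I (\<lambda>_. 1) = 1"
  using EE_prod[OF assms(1), of p "\<lambda>_ _. 1"] assms(2) by simp

lemma EE_single:
  assumes "finite I" "sum p UNIV = 1" "i \<in> I"
  shows "EE p I (\<lambda>w. g (w i)) = (\<Sum>v\<in>UNIV. p v * g v)"
proof -
  have "EE p I (\<lambda>w. g (w i)) = EE p I (\<lambda>w. \<Prod>k\<in>I. (\<lambda>k v. if k = i then g v else 1) k (w k))"
    using assms by (simp add: prod.delta)
  also have "\<dots> = (\<Prod>k\<in>I. \<Sum>v\<in>UNIV. p v * (if k = i then g v else 1))"
    by (rule EE_prod[OF assms(1)])
  also have "\<dots> = (\<Prod>k\<in>I. if k = i then (\<Sum>v\<in>UNIV. p v * g v) else 1)"
    by (rule prod.cong) (auto simp: assms)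
  also have "\<dots> = (\<Sum>v\<in>UNIV. p v * g v)" using assms by (simp add: prod.delta)
  finally show ?thesis .
qed

lemma EE_pair:
  assumes "finite I" "sum p UNIV = 1" "i \<in> I" "j \<in> I" "i \<noteq> j"
  shows "EE p I (\<lambda>w. g (w i) * h (w j)) = (\<Sum>v\<in>UNIV. p v * g v) * (\<Sum>v\<in>UNIV. p v * h v)"
proof -
  have "EE p I (\<lambda>w. g (w i) * h (w j)) = EE p I (\<lambda>w. \<Prod>k\<in>I. (\<lambda>k v. (if k = i then g v else 1) * (if k = j then h v else 1)) k (w k))"
    using assms by (simp add: prod.distrib prod.delta)
  also have "\<dots> = (\<Prod>k\<in>I. \<Sum>v\<in>UNIV. p v * ((if k = i then g v else 1) * (if k = j then h v else 1)))"
    by (rule EE_prod[OF assms(1)])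
  also have "\<dots> = (\<Prod>k\<in>I. (if k = i then (\<Sum>v\<in>UNIV. p v * g v) else 1) * (if k = j then (\<Sum>v\<in>UNIV. p v * h v) else 1))"
    by (rule prod.cong) (use assms in auto)
  also have "\<dots> = (\<Sum>v\<in>UNIV. p v * g v) * (\<Sum>v\<in>UNIV. p v * h v)" using assms by (simp add: prod.distrib prod.delta)
  finally show ?thesis .
qed

lemma EE_add: "EE p I (\<lambda>w. f w + g w) = EE p I f + EE p I g"
  unfolding EE_def by (simp add: distrib_left sum.distrib)
lemma EE_diff: "EE p I (\<lambda>w. f w - g w) = EE p I f - EE p I g"
  unfolding EE_def by (simp add: right_diff_distrib sum_subtractf)
lemma EE_cmult: "EE p I (\<lambda>w. c * f w) = c * EE p I f"
  unfolding EE_def by (simp add: sum_distrib_left algebra_simps)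
lemma EE_sum: "EE p I (\<lambda>w. \<Sum>y\<in>Y. g y w) = (\<Sum>y\<in>Y. EE p I (g y))"
  unfolding EE_def by (simp add: sum_distrib_left sum.swap[of _ Y])
lemma EE_const: "finite I \<Longrightarrow> sum p UNIV = 1 \<Longrightarrow> EE p I (\<lambda>_. c) = c"
  using EE_cmult[of p I c "\<lambda>_. 1"] EE_one[of I p] by simp

lemma EE_mono:
  assumes "\<forall>v. 0 \<le> p v" "\<And>w. w \<in> PiE I (\<lambda>_. UNIV) \<Longrightarrow> f w \<le> g w"
  shows "EE p I f \<le> EE p I g"
  unfolding EE_def
  by (rule sum_mono, rule mult_left_mono) (use assms in \<open>auto intro: prod_nonneg\<close>)

lemma EE_abs:
  assumes "\<forall>v. 0 \<le> p v"
  shows "\<bar>EE p I f\<bar> \<le> EE p I (\<lambda>w. \<bar>f w\<bar>)"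
  unfolding EE_def
proof -
  have "\<bar>\<Sum>w\<in>PiE I (\<lambda>_. UNIV). (\<Prod>i\<in>I. p (w i)) * f w\<bar> \<le> (\<Sum>w\<in>PiE I (\<lambda>_. UNIV). \<bar>(\<Prod>i\<in>I. p (w i)) * f w\<bar>)"
    by (rule sum_abs)
  also have "\<dots> = (\<Sum>w\<in>PiE I (\<lambda>_. UNIV). (\<Prod>i\<in>I. p (w i)) * \<bar>f w\<bar>)"
  proof (rule sum.cong)
    fix w
    have "0 \<le> (\<Prod>i\<in>I. p (w i))" using assms by (auto intro: prod_nonneg)
    then show "\<bar>(\<Prod>i\<in>I. p (w i)) * f w\<bar> = (\<Prod>i\<in>I. p (w i)) * \<bar>f w\<bar>" by (simp add: abs_mult)
  qed simp
  finally show "\<bar>\<Sum>w\<in>PiE I (\<lambda>_. UNIV). (\<Prod>i\<in>I. p (w i)) * f w\<bar> \<le> (\<Sum>w\<in>PiE I (\<lambda>_. UNIV). (\<Prod>i\<in>I. p (w i)) * \<bar>f w\<bar>)" .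
qed

lemma EE_sq_nonneg:
  assumes "\<forall>v. 0 \<le> p v"
  shows "0 \<le> EE p I (\<lambda>w. (f w)\<^sup>2)"
  using EE_mono[OF assms, of I "\<lambda>_. 0" "\<lambda>w. (f w)\<^sup>2"] by (simp add: EE_def)

lemma concentration:
  fixes p :: "'w::finite \<Rightarrow> real"
  assumes p0: "\<forall>v. 0 \<le> p v" and p1: "sum p UNIV = 1" and fin: "finite I"
    and a01: "\<And>i v. 0 \<le> a i v \<and> a i v \<le> 1"
  shows "EE p I (\<lambda>w. \<bar>\<Sum>i\<in>I. (a i (w i) - (\<Sum>v\<in>UNIV. p v * a i v))\<bar>) \<le> sqrt (real (card I))"
proof -
  define c where "c i = (\<Sum>v\<in>UNIV. p v * a i v)" for i
  define Y where "Y i v = a i v - c i" for i v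
  define X where "X w = (\<Sum>i\<in>I. Y i (w i))" for w
  have c01: "0 \<le> c i \<and> c i \<le> 1" for i
  proof
    show "0 \<le> c i" unfolding c_def using p0 a01 by (auto intro: sum_nonneg)
    have "c i \<le> (\<Sum>v\<in>UNIV. p v * 1)" unfolding c_def
      by (rule sum_mono, rule mult_left_mono) (use p0 a01 in auto)
    then show "c i \<le> 1" using p1 by simp
  qed
  have Yb: "\<bar>Y i v\<bar> \<le> 1" for i v unfolding Y_def using c01[of i] a01[of i v] by auto
  have Y0: "(\<Sum>v\<in>UNIV. p v * Y i v) = 0" for i
    unfolding Y_def by (simp add: right_diff_distrib sum_subtractf sum_distrib_right[symmetric] p1 c_def)
  have sq: "(X w)\<^sup>2 = (\<Sum>i\<in>I. \<Sum>j\<in>I. Y i (w i) * Y j (w j))" for w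
    unfolding X_def power2_eq_square by (rule sum_product)
  have EX2: "EE p I (\<lambda>w. (X w)\<^sup>2) \<le> real (card I)"
  proof -
    have "EE p I (\<lambda>w. (X w)\<^sup>2) = (\<Sum>i\<in>I. \<Sum>j\<in>I. EE p I (\<lambda>w. Y i (w i) * Y j (w j)))"
      by (simp add: sq EE_sum)
    also have "\<dots> \<le> (\<Sum>i\<in>I. 1)"
    proof (rule sum_mono)
      fix i assume i: "i \<in> I"
      have "(\<Sum>j\<in>I. EE p I (\<lambda>w. Y i (w i) * Y j (w j))) = (\<Sum>j\<in>I. if j = i then (\<Sum>v\<in>UNIV. p v * (Y i v * Y i v)) else 0)"
      proof (rule sum.cong)
        fix j assume j: "j \<in> I"
        show "EE p I (\<lambda>w. Y i (w i) * Y j (w j)) = (if j = i then (\<Sum>v\<in>UNIV. p v * (Y i v * Y i v)) else 0)"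
        proof (cases "j = i")
          case True
          then show ?thesis using EE_single[OF fin p1 i, of "\<lambda>v. Y i v * Y i v"] by simp
        next
          case False
          then show ?thesis using EE_pair[OF fin p1 i j, of "Y i" "Y j"] Y0 by simp
        qed
      qed simp
      also have "\<dots> = (\<Sum>v\<in>UNIV. p v * (Y i v * Y i v))" using i fin by (simp add: sum.delta')
      also have "\<dots> \<le> (\<Sum>v\<in>UNIV. p v * 1)"
      proof (rule sum_mono, rule mult_left_mono)
        fix v
        have "\<bar>Y i v\<bar> * \<bar>Y i v\<bar> \<le> 1 * 1" by (rule mult_mono) (use Yb in auto)
        then show "Y i v * Y i v \<le> 1" by (simp add: abs_mult[symmetric])
      qed (use p0 in auto)
      finally show "(\<Sum>j\<in>I. EE p I (\<lambda>w. Y i (w i) * Y j (w j))) \<le> 1" using p1 by simp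
    qed
    finally show ?thesis by simp
  qed
  define e where "e = EE p I (\<lambda>w. \<bar>X w\<bar>)"
  have e0: "0 \<le> e" unfolding e_def using EE_mono[OF p0, of I "\<lambda>_. 0" "\<lambda>w. \<bar>X w\<bar>"] by (simp add: EE_def)
  have "0 \<le> EE p I (\<lambda>w. (\<bar>X w\<bar> - e)\<^sup>2)" by (rule EE_sq_nonneg[OF p0])
  also have "EE p I (\<lambda>w. (\<bar>X w\<bar> - e)\<^sup>2) = EE p I (\<lambda>w. (X w)\<^sup>2) - 2 * e * e + e\<^sup>2"
  proof -
    have "(\<lambda>w. (\<bar>X w\<bar> - e)\<^sup>2) = (\<lambda>w. ((X w)\<^sup>2 - (2 * e) * \<bar>X w\<bar>) + e\<^sup>2)"
      by (auto simp: power2_eq_square algebra_simps)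
    then show ?thesis
      by (simp only: EE_add EE_diff EE_cmult EE_const[OF fin p1] e_def[symmetric])
  qed
  finally have "e\<^sup>2 \<le> real (card I)" using EX2 by (simp add: power2_eq_square)
  then have "e \<le> sqrt (real (card I))" using e0 real_le_rsqrt by blast
  then show ?thesis unfolding e_def X_def Y_def c_def .
qed



lemma sum_agents:
  fixes s :: "nat \<Rightarrow> 'x::finite" and g :: "'x \<Rightarrow> real"
  shows "(\<Sum>i\<in>{0..<n}. g (s i)) = (\<Sum>x\<in>UNIV. real (card {i\<in>{0..<n}. s i = x}) * g x)"
proof -
  have "(\<Sum>i\<in>{0..<n}. g (s i)) = (\<Sum>x\<in>UNIV. \<Sum>i\<in>{i\<in>{0..<n}. s i = x}. g (s i))"
    by (rule sum.group[symmetric]) auto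
  also have "\<dots> = (\<Sum>x\<in>UNIV. real (card {i\<in>{0..<n}. s i = x}) * g x)"
    by (rule sum.cong) auto
  finally show ?thesis .
qed

lemma emp_sum:
  fixes s :: "nat \<Rightarrow> 'x::finite" and g :: "'x \<Rightarrow> real"
  assumes "0 < n"
  shows "(\<Sum>i\<in>{0..<n}. g (s i)) = real n * (\<Sum>x\<in>UNIV. emp n s x * g x)"
  unfolding sum_agents emp_def sum_distrib_left using assms by (intro sum.cong) auto

lemma emp_Mn:
  fixes s :: "nat \<Rightarrow> 'x::finite"
  assumes "0 < n"
  shows "emp n s \<in> Mn n"
proof -
  have "real n * 1 = real n * (\<Sum>x\<in>UNIV. emp n s x * 1)"
    using emp_sum[OF assms, of "\<lambda>_. 1" s] by simp
  then have "sum (emp n s) UNIV = 1" using assms by simp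
  moreover have "\<forall>x. 0 \<le> emp n s x" unfolding emp_def by auto
  moreover have "\<forall>x. \<exists>k::nat. k \<le> n \<and> emp n s x = real k / real n"
  proof
    fix x
    have "card {i\<in>{0..<n}. s i = x} \<le> card {0..<n}" by (rule card_mono) auto
    then show "\<exists>k::nat. k \<le> n \<and> emp n s x = real k / real n" unfolding emp_def by auto
  qed
  ultimately show ?thesis unfolding Mn_def Delta_def by auto
qed

lemma Mn_realizable:
  fixes m :: "'x::finite \<Rightarrow> real"
  assumes "0 < n" "m \<in> Mn n" shows "\<exists>s. emp n s = m"
proof -
  from assms(2) have "\<forall>x. \<exists>k::nat. k \<le> n \<and> m x = real k / real n" unfolding Mn_def by auto
  from choice[OF this] obtain k where k0: "\<forall>x. k x \<le> n \<and> m x = real (k x) / real n" by blast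
  then have k: "\<And>x. m x = real (k x) / real n" by blast
  have "sum m UNIV = 1" using assms(2) unfolding Mn_def Delta_def by auto
  then have "(\<Sum>x\<in>UNIV. real (k x)) / real n = 1" by (simp add: k sum_divide_distrib)
  then have "real (\<Sum>x\<in>UNIV. k x) = real n" using assms(1) by simp
  then have sk: "(\<Sum>x\<in>UNIV. k x) = n" by linarith
  define S where "S = Sigma (UNIV::'x set) (\<lambda>x. {..<k x})"
  have fS: "finite S" unfolding S_def by auto
  have cS: "card S = n" unfolding S_def using sk by (simp add: card_SigmaI)
  obtain h where h: "bij_betw h {0..<n} S" using ex_bij_betw_nat_finite[OF fS] unfolding cS by blast
  define s where "s i = fst (h i)" for i
  have hS: "h ` {0..<n} = S" and hi: "inj_on h {0..<n}" using h unfolding bij_betw_def by blast+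
  have "card {i\<in>{0..<n}. s i = x} = k x" for x
  proof -
    have "h ` {i\<in>{0..<n}. s i = x} = {p\<in>S. fst p = x}"
    proof
      show "h ` {i\<in>{0..<n}. s i = x} \<subseteq> {p\<in>S. fst p = x}" using hS unfolding s_def by blast
      show "{p\<in>S. fst p = x} \<subseteq> h ` {i\<in>{0..<n}. s i = x}"
      proof
        fix p assume p: "p \<in> {p\<in>S. fst p = x}"
        then have "p \<in> h ` {0..<n}" using hS by simp
        then obtain i where i: "i \<in> {0..<n}" "p = h i" by blast
        then show "p \<in> h ` {i\<in>{0..<n}. s i = x}" using p unfolding s_def by blast
      qed
    qed
    moreover have "inj_on h {i\<in>{0..<n}. s i = x}" using hi by (rule inj_on_subset) blast
    then have "card (h ` {i\<in>{0..<n}. s i = x}) = card {i\<in>{0..<n}. s i = x}" by (rule card_image)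
    ultimately have "card {i\<in>{0..<n}. s i = x} = card {p\<in>S. fst p = x}" by simp
    also have "{p\<in>S. fst p = x} = {x} \<times> {..<k x}" unfolding S_def by auto
    finally show ?thesis by simp
  qed
  then have "emp n s = m" unfolding emp_def by (intro ext) (simp add: k)
  then show ?thesis by blast
qed

lemma states_of_emp:
  fixes m :: "'x::finite \<Rightarrow> real"
  assumes "0 < n" "m \<in> Mn n" shows "emp n (states_of n m) = m"
  unfolding states_of_def using Mn_realizable[OF assms] by (rule someI_ex)

lemma card_filter_sum: "real (card {i\<in>A. P i}) = (\<Sum>i\<in>A. if P i then 1 else 0)" if "finite A"
  using that by (simp add: sum.inter_filter[symmetric])



lemma Ptrans_nonneg: "\<forall>w. 0 \<le> pw t w \<Longrightarrow> 0 \<le> Ptrans f pw t x u z y"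
  unfolding Ptrans_def by (auto intro: sum_nonneg)

lemma Ptrans_le1:
  assumes "\<forall>w. 0 \<le> pw t w" "sum (pw t) UNIV = 1"
  shows "Ptrans f pw t x u z y \<le> 1"
proof -
  have "Ptrans f pw t x u z y \<le> (\<Sum>w\<in>UNIV. 1 * pw t w)" unfolding Ptrans_def
    by (rule sum_mono, rule mult_right_mono) (use assms in auto)
  then show ?thesis using assms by simp
qed

lemma Ptrans_sum:
  assumes "sum (pw t) UNIV = 1"
  shows "(\<Sum>y\<in>UNIV. Ptrans f pw t x u z y) = 1"
proof -
  have "(\<Sum>y\<in>UNIV. Ptrans f pw t x u z y) = (\<Sum>w\<in>UNIV. \<Sum>y\<in>UNIV. (if f t x u w z = y then 1 else 0) * pw t w)"
    unfolding Ptrans_def by (rule sum.swap)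
  also have "\<dots> = (\<Sum>w\<in>UNIV. pw t w)"
  proof (rule sum.cong)
    fix w
    have h: "(\<Sum>y\<in>UNIV. (if f t x u w z = y then 1 else (0::real))) = 1" by (simp add: sum.delta)
    show "(\<Sum>y\<in>UNIV. (if f t x u w z = y then 1 else 0) * pw t w) = pw t w"
      using h by (simp add: sum_distrib_right[symmetric])
  qed simp
  finally show ?thesis using assms by simp
qed

lemma fhat_Delta:
  assumes "\<forall>w. 0 \<le> pw t w" "sum (pw t) UNIV = 1" "z \<in> Delta"
  shows "fhat f pw t z \<gamma> \<in> Delta"
proof -
  have z0: "\<forall>x. 0 \<le> z x" and z1: "sum z UNIV = 1" using assms(3) unfolding Delta_def by auto
  have "\<forall>y. 0 \<le> fhat f pw t z \<gamma> y" unfolding fhat_def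
    using z0 Ptrans_nonneg[of pw t] assms(1) by (auto intro!: sum_nonneg mult_nonneg_nonneg)
  moreover have "sum (fhat f pw t z \<gamma>) UNIV = 1"
  proof -
    have "sum (fhat f pw t z \<gamma>) UNIV = (\<Sum>x\<in>UNIV. z x * (\<Sum>y\<in>UNIV. Ptrans f pw t x (\<gamma> x) z y))"
      unfolding fhat_def by (subst sum.swap) (simp add: sum_distrib_left)
    also have "\<dots> = 1" using z1 by (simp add: Ptrans_sum[of pw t, OF assms(2)])
    finally show ?thesis .
  qed
  ultimately show ?thesis unfolding Delta_def by auto
qed

lemma lip_sum:
  fixes z1 z2 :: "'x::finite \<Rightarrow> real"
  assumes "z1 \<in> Delta" "z2 \<in> Delta" "\<And>x. \<bar>g1 x\<bar> \<le> B" "\<And>x. \<bar>g1 x - g2 x\<bar> \<le> D"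
  shows "\<bar>(\<Sum>x\<in>UNIV. z1 x * g1 x) - (\<Sum>x\<in>UNIV. z2 x * g2 x)\<bar> \<le> real CARD('x) * supn (\<lambda>v. z1 v - z2 v) * B + D"
proof -
  define d where "d = supn (\<lambda>v. z1 v - z2 v)"
  have d0: "0 \<le> d" unfolding d_def by (rule supn_nonneg)
  have z20: "\<forall>x. 0 \<le> z2 x" and z21: "sum z2 UNIV = 1" using assms(2) unfolding Delta_def by auto
  have eq: "(\<Sum>x\<in>UNIV. z1 x * g1 x) - (\<Sum>x\<in>UNIV. z2 x * g2 x) = (\<Sum>x\<in>UNIV. (z1 x - z2 x) * g1 x) + (\<Sum>x\<in>UNIV. z2 x * (g1 x - g2 x))"
    by (simp add: sum_subtractf[symmetric] sum.distrib[symmetric] algebra_simps)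
  have a: "\<bar>\<Sum>x\<in>UNIV. (z1 x - z2 x) * g1 x\<bar> \<le> (\<Sum>x\<in>(UNIV::'x set). d * B)"
  proof -
    have "\<bar>\<Sum>x\<in>UNIV. (z1 x - z2 x) * g1 x\<bar> \<le> (\<Sum>x\<in>UNIV. \<bar>(z1 x - z2 x) * g1 x\<bar>)" by (rule sum_abs)
    also have "\<dots> \<le> (\<Sum>x\<in>(UNIV::'x set). d * B)"
    proof (rule sum_mono)
      fix x
      have "\<bar>z1 x - z2 x\<bar> \<le> d" unfolding d_def using supn_ge[of "\<lambda>v. z1 v - z2 v" x] by simp
      then show "\<bar>(z1 x - z2 x) * g1 x\<bar> \<le> d * B" unfolding abs_mult
        by (rule mult_mono) (use assms(3)[of x] d0 in auto)
    qed
    finally show ?thesis .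
  qed
  have b: "\<bar>\<Sum>x\<in>UNIV. z2 x * (g1 x - g2 x)\<bar> \<le> (\<Sum>x\<in>UNIV. z2 x * D)"
  proof -
    have "\<bar>\<Sum>x\<in>UNIV. z2 x * (g1 x - g2 x)\<bar> \<le> (\<Sum>x\<in>UNIV. \<bar>z2 x * (g1 x - g2 x)\<bar>)" by (rule sum_abs)
    also have "\<dots> \<le> (\<Sum>x\<in>UNIV. z2 x * D)"
      by (rule sum_mono) (use z20 assms(4) in \<open>auto simp: abs_mult intro: mult_left_mono\<close>)
    finally show ?thesis .
  qed
  have "(\<Sum>x\<in>UNIV. z2 x * D) = D" using z21 by (simp add: sum_distrib_right[symmetric])
  then show ?thesis using a b eq unfolding d_def by (simp add: algebra_simps)
qed

lemma E_supn:
  fixes f :: "nat \<Rightarrow> 'x::finite \<Rightarrow> 'u \<Rightarrow> 'w::finite \<Rightarrow> ('x \<Rightarrow> real) \<Rightarrow> 'x"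
  assumes p0: "\<forall>w. 0 \<le> pw t w" and p1: "sum (pw t) UNIV = 1" and n: "0 < n" and m: "m \<in> Mn n"
  shows "EE (pw t) {0..<n} (\<lambda>w. supn (\<lambda>y. emp n (\<lambda>i. f t (states_of n m i) (\<gamma> (states_of n m i)) (w i) m) y - fhat f pw t m \<gamma> y))
     \<le> real CARD('x) / sqrt (real n)"
proof -
  define s where "s = states_of n m"
  have sm: "emp n s = m" unfolding s_def by (rule states_of_emp[OF n m])
  define a where "a y i v = (if f t (s i) (\<gamma> (s i)) v m = y then 1 else (0::real))" for y i v
  define c where "c y i = (\<Sum>v\<in>UNIV. pw t v * a y i v)" for y i
  have diff: "emp n (\<lambda>i. f t (s i) (\<gamma> (s i)) (w i) m) y - fhat f pw t m \<gamma> y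
      = (\<Sum>i\<in>{0..<n}. (a y i (w i) - c y i)) / real n" for w y
  proof -
    have e1: "emp n (\<lambda>i. f t (s i) (\<gamma> (s i)) (w i) m) y = (\<Sum>i\<in>{0..<n}. a y i (w i)) / real n"
      unfolding emp_def a_def by (subst card_filter_sum) auto
    have "(\<Sum>i\<in>{0..<n}. c y i) = (\<Sum>i\<in>{0..<n}. Ptrans f pw t (s i) (\<gamma> (s i)) m y)"
      unfolding c_def a_def Ptrans_def by (intro sum.cong refl) (simp add: mult.commute)
    also have "\<dots> = real n * (\<Sum>x\<in>UNIV. emp n s x * Ptrans f pw t x (\<gamma> x) m y)"
      by (rule emp_sum[OF n, of "\<lambda>x. Ptrans f pw t x (\<gamma> x) m y"])
    also have "\<dots> = real n * fhat f pw t m \<gamma> y" unfolding fhat_def sm ..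
    finally have "fhat f pw t m \<gamma> y = (\<Sum>i\<in>{0..<n}. c y i) / real n" using n by simp
    then show ?thesis using e1 by (simp add: sum_subtractf diff_divide_distrib)
  qed
  have "EE (pw t) {0..<n} (\<lambda>w. supn (\<lambda>y. emp n (\<lambda>i. f t (s i) (\<gamma> (s i)) (w i) m) y - fhat f pw t m \<gamma> y))
     \<le> EE (pw t) {0..<n} (\<lambda>w. \<Sum>y\<in>UNIV. (1 / real n) * \<bar>\<Sum>i\<in>{0..<n}. (a y i (w i) - c y i)\<bar>)"
  proof (rule EE_mono[OF p0])
    fix w
    show "supn (\<lambda>y. emp n (\<lambda>i. f t (s i) (\<gamma> (s i)) (w i) m) y - fhat f pw t m \<gamma> y)
         \<le> (\<Sum>y\<in>UNIV. (1 / real n) * \<bar>\<Sum>i\<in>{0..<n}. (a y i (w i) - c y i)\<bar>)"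
      using supn_le_sum[of "\<lambda>y. emp n (\<lambda>i. f t (s i) (\<gamma> (s i)) (w i) m) y - fhat f pw t m \<gamma> y"]
      unfolding diff using n by (simp add: abs_divide)
  qed
  also have "\<dots> = (\<Sum>y\<in>UNIV. (1 / real n) * EE (pw t) {0..<n} (\<lambda>w. \<bar>\<Sum>i\<in>{0..<n}. (a y i (w i) - c y i)\<bar>))"
    by (simp only: EE_sum EE_cmult)
  also have "\<dots> \<le> (\<Sum>y\<in>(UNIV::'x set). (1 / real n) * sqrt (real n))"
  proof (rule sum_mono, rule mult_left_mono)
    fix y
    show "EE (pw t) {0..<n} (\<lambda>w. \<bar>\<Sum>i\<in>{0..<n}. (a y i (w i) - c y i)\<bar>) \<le> sqrt (real n)"
      using concentration[OF p0 p1, of "{0..<n}" "a y"] unfolding c_def a_def by simp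
  qed (use n in simp)
  also have "\<dots> = real CARD('x) / sqrt (real n)"
  proof -
    have sq: "sqrt (real n) * sqrt (real n) = real n" by simp
    have "sqrt (real n) > 0" using n by simp
    then show ?thesis using sq by (simp add: field_simps)
  qed
  finally show ?thesis unfolding s_def .
qed



context
  fixes T :: nat
    and f :: "nat \<Rightarrow> 'x::finite \<Rightarrow> 'u::finite \<Rightarrow> 'w::finite \<Rightarrow> ('x \<Rightarrow> real) \<Rightarrow> 'x"
    and pw :: "nat \<Rightarrow> 'w \<Rightarrow> real"
    and ell :: "nat \<Rightarrow> 'x \<Rightarrow> 'u \<Rightarrow> ('x \<Rightarrow> real) \<Rightarrow> real"
    and K1 K2 :: "nat \<Rightarrow> real"
  assumes noise: "\<forall>t\<in>{1..T}. (\<forall>w. 0 \<le> pw t w) \<and> (\<Sum>w\<in>UNIV. pw t w) = 1"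
    and cost_nonneg: "\<forall>t\<in>{1..T}. \<forall>x u z. z \<in> Ispace \<longrightarrow> 0 \<le> ell t x u z"
    and Lip: "\<forall>t\<in>{1..T}. 0 < K1 t \<and> 0 < K2 t \<and>
       (\<forall>x y u z1 z2. z1 \<in> Ispace \<longrightarrow> z2 \<in> Ispace \<longrightarrow>
          \<bar>Ptrans f pw t x u z1 y - Ptrans f pw t x u z2 y\<bar> \<le> K1 t * supn (\<lambda>v. z1 v - z2 v)) \<and>
       (\<forall>x u z1 z2. z1 \<in> Ispace \<longrightarrow> z2 \<in> Ispace \<longrightarrow>
          \<bar>ell t x u z1 - ell t x u z2\<bar> \<le> K2 t * supn (\<lambda>v. z1 v - z2 v))"
begin

lemma Lip_at:
  assumes t: "t \<in> {1..T}"
  shows "0 < K1 t" "0 < K2 t"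
    "\<And>x y u z1 z2. z1 \<in> Ispace \<Longrightarrow> z2 \<in> Ispace \<Longrightarrow>
          \<bar>Ptrans f pw t x u z1 y - Ptrans f pw t x u z2 y\<bar> \<le> K1 t * supn (\<lambda>v. z1 v - z2 v)"
    "\<And>x u z1 z2. z1 \<in> Ispace \<Longrightarrow> z2 \<in> Ispace \<Longrightarrow>
          \<bar>ell t x u z1 - ell t x u z2\<bar> \<le> K2 t * supn (\<lambda>v. z1 v - z2 v)"
    "\<forall>w. 0 \<le> pw t w" "sum (pw t) UNIV = 1"
    "\<And>x u z. z \<in> Ispace \<Longrightarrow> 0 \<le> ell t x u z"
  using bspec[OF Lip t] bspec[OF noise t] bspec[OF cost_nonneg t] by auto

lemma cost_bound:
  assumes t: "t \<in> {1..T}"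
  shows "\<exists>B\<ge>0. \<forall>x u z. z \<in> Ispace \<longrightarrow> ell t x u z \<le> B"
proof -
  define B where "B = Max (range (\<lambda>(x,u). ell t x u (\<lambda>_. 0))) + K2 t"
  have z0: "(\<lambda>_. 0) \<in> Ispace" unfolding Ispace_def by auto
  have mx: "ell t x u (\<lambda>_. 0) \<le> Max (range (\<lambda>(x,u). ell t x u (\<lambda>_. 0)))" for x u
    by (rule Max_ge) (auto intro: image_eqI[where x="(x,u)"])
  have K2: "0 < K2 t" using Lip_at[OF t] by auto
  have "\<forall>x u z. z \<in> Ispace \<longrightarrow> ell t x u z \<le> B"
  proof (intro allI impI)
    fix x u z assume z: "(z::'x\<Rightarrow>real) \<in> Ispace"
    have a: "\<bar>ell t x u z - ell t x u (\<lambda>_. 0)\<bar> \<le> K2 t * supn (\<lambda>v. z v - 0)"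
      using Lip_at(4)[OF t z z0, of x u] by simp
    have "supn (\<lambda>v. z v - 0) \<le> 1" by (rule supn_le) (use z in \<open>auto simp: Ispace_def\<close>)
    then have "K2 t * supn (\<lambda>v. z v - 0) \<le> K2 t * 1" using K2 by (intro mult_left_mono) auto
    then show "ell t x u z \<le> B" unfolding B_def using a mx[of x u] by linarith
  qed
  moreover have "0 \<le> B" unfolding B_def using mx[of undefined undefined] Lip_at(7)[OF t z0, of undefined undefined] K2 by linarith
  ultimately show ?thesis by blast
qed

lemma VhatR_lip:
  "1 \<le> t \<Longrightarrow> t + k \<le> Suc T \<Longrightarrow> \<exists>L\<ge>0. \<forall>z1\<in>Delta. \<forall>z2\<in>Delta.
     \<bar>VhatR f pw ell k t z1 - VhatR f pw ell k t z2\<bar> \<le> L * supn (\<lambda>v. z1 v - z2 v)"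
proof (induction k arbitrary: t)
  case 0 then show ?case by (intro exI[of _ 0]) auto
next
  case (Suc k)
  have t: "t \<in> {1..T}" using Suc.prems by auto
  obtain L where L0: "0 \<le> L" and L: "\<forall>z1\<in>Delta. \<forall>z2\<in>Delta.
      \<bar>VhatR f pw ell k (Suc t) z1 - VhatR f pw ell k (Suc t) z2\<bar> \<le> L * supn (\<lambda>v. z1 v - z2 v)"
    using Suc.IH[of "Suc t"] Suc.prems by auto
  obtain B where B0: "0 \<le> B" and B: "\<forall>x u z. z \<in> Ispace \<longrightarrow> ell t x u z \<le> B"
    using cost_bound[OF t] by auto
  note LA = Lip_at[OF t]
  define L' where "L' = real CARD('x) * B + K2 t + L * (real CARD('x) + K1 t)"
  show ?case
  proof (intro exI[of _ L'] conjI ballI)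
    show "0 \<le> L'" unfolding L'_def using B0 LA(1,2) L0 by simp
    fix z1 z2 :: "'x \<Rightarrow> real" assume z1: "z1 \<in> Delta" and z2: "z2 \<in> Delta"
    define d where "d = supn (\<lambda>v. z1 v - z2 v)"
    have I1: "z1 \<in> Ispace" "z2 \<in> Ispace" using Delta_Ispace z1 z2 by auto
    have fh: "supn (\<lambda>y. fhat f pw t z1 \<gamma> y - fhat f pw t z2 \<gamma> y) \<le> (real CARD('x) + K1 t) * d" for \<gamma>
    proof (rule supn_le)
      fix y
      have "\<bar>fhat f pw t z1 \<gamma> y - fhat f pw t z2 \<gamma> y\<bar> \<le> real CARD('x) * d * 1 + K1 t * d"
        unfolding fhat_def d_def
      proof (rule lip_sum[OF z1 z2])
        fix x
        show "\<bar>Ptrans f pw t x (\<gamma> x) z1 y\<bar> \<le> 1"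
          using Ptrans_nonneg[of pw t f x "\<gamma> x" z1 y] Ptrans_le1[of pw t f x "\<gamma> x" z1 y] LA(5,6) by auto
        show "\<bar>Ptrans f pw t x (\<gamma> x) z1 y - Ptrans f pw t x (\<gamma> x) z2 y\<bar> \<le> K1 t * supn (\<lambda>v. z1 v - z2 v)"
          by (rule LA(3)[OF I1])
      qed
      then show "\<bar>fhat f pw t z1 \<gamma> y - fhat f pw t z2 \<gamma> y\<bar> \<le> (real CARD('x) + K1 t) * d"
        by (simp add: algebra_simps)
    qed
    have ch: "\<bar>chat ell t z1 \<gamma> - chat ell t z2 \<gamma>\<bar> \<le> real CARD('x) * d * B + K2 t * d" for \<gamma>
      unfolding chat_def d_def
    proof (rule lip_sum[OF z1 z2])
      fix x
      show "\<bar>ell t x (\<gamma> x) z1\<bar> \<le> B" using B LA(7)[OF I1(1), of x "\<gamma> x"] I1 by auto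
      show "\<bar>ell t x (\<gamma> x) z1 - ell t x (\<gamma> x) z2\<bar> \<le> K2 t * supn (\<lambda>v. z1 v - z2 v)"
        by (rule LA(4)[OF I1])
    qed
    show "\<bar>VhatR f pw ell (Suc k) t z1 - VhatR f pw ell (Suc k) t z2\<bar> \<le> L' * supn (\<lambda>v. z1 v - z2 v)"
      unfolding VhatR.simps d_def[symmetric]
    proof (rule Min_range_diff)
      fix \<gamma>
      have fz: "fhat f pw t z1 \<gamma> \<in> Delta" "fhat f pw t z2 \<gamma> \<in> Delta"
        using fhat_Delta[of pw t, OF LA(5,6)] z1 z2 by auto
      have "\<bar>VhatR f pw ell k (Suc t) (fhat f pw t z1 \<gamma>) - VhatR f pw ell k (Suc t) (fhat f pw t z2 \<gamma>)\<bar>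
          \<le> L * supn (\<lambda>y. fhat f pw t z1 \<gamma> y - fhat f pw t z2 \<gamma> y)" using L fz by auto
      also have "\<dots> \<le> L * ((real CARD('x) + K1 t) * d)" by (rule mult_left_mono[OF fh L0])
      finally have v: "\<bar>VhatR f pw ell k (Suc t) (fhat f pw t z1 \<gamma>) - VhatR f pw ell k (Suc t) (fhat f pw t z2 \<gamma>)\<bar>
          \<le> L * ((real CARD('x) + K1 t) * d)" .
      have eq: "L' * d = real CARD('x) * d * B + K2 t * d + L * ((real CARD('x) + K1 t) * d)"
        unfolding L'_def by (simp add: algebra_simps)
      show "\<bar>(chat ell t z1 \<gamma> + VhatR f pw ell k (Suc t) (fhat f pw t z1 \<gamma>)) -
            (chat ell t z2 \<gamma> + VhatR f pw ell k (Suc t) (fhat f pw t z2 \<gamma>))\<bar> \<le> L' * d"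
        using v ch[of \<gamma>] unfolding eq by linarith
    qed
  qed
qed

lemma VR_gap:
  "1 \<le> t \<Longrightarrow> t + k \<le> Suc T \<Longrightarrow> \<exists>C. \<forall>n. 0 < n \<longrightarrow>
     (\<forall>m\<in>Mn n. \<bar>VR f pw ell n k t m - VhatR f pw ell k t m\<bar> \<le> C / sqrt (real n))"
proof (induction k arbitrary: t)
  case 0 then show ?case by (intro exI[of _ 0]) auto
next
  case (Suc k)
  have t: "t \<in> {1..T}" using Suc.prems by auto
  note LA = Lip_at[OF t]
  obtain C where C: "\<forall>n. 0 < n \<longrightarrow> (\<forall>m\<in>Mn n. \<bar>VR f pw ell n k (Suc t) m - VhatR f pw ell k (Suc t) m\<bar> \<le> C / sqrt (real n))"
    using Suc.IH[of "Suc t"] Suc.prems by auto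
  obtain L where L0: "0 \<le> L" and L: "\<forall>z1\<in>Delta. \<forall>z2\<in>Delta.
      \<bar>VhatR f pw ell k (Suc t) z1 - VhatR f pw ell k (Suc t) z2\<bar> \<le> L * supn (\<lambda>v. z1 v - z2 v)"
    using VhatR_lip[of "Suc t" k] Suc.prems by auto
  define C' where "C' = C + L * real CARD('x)"
  show ?case
  proof (intro exI[of _ C'] allI impI ballI)
    fix n :: nat and m :: "'x \<Rightarrow> real" assume n: "0 < n" and m: "m \<in> Mn n"
    define s where "s = states_of n m"
    have mD: "m \<in> Delta" using m by (rule Mn_Delta)
    show "\<bar>VR f pw ell n (Suc k) t m - VhatR f pw ell (Suc k) t m\<bar> \<le> C' / sqrt (real n)"
      unfolding VR.simps VhatR.simps
    proof (rule Min_range_diff)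
      fix \<gamma>
      define M where "M w = emp n (\<lambda>i. f t (s i) (\<gamma> (s i)) (w i) m)" for w
      define V0 where "V0 = VhatR f pw ell k (Suc t) (fhat f pw t m \<gamma>)"
      have fD: "fhat f pw t m \<gamma> \<in> Delta" using fhat_Delta[of pw t, OF LA(5,6) mD] .
      have En: "Enext f pw n t m \<gamma> (VR f pw ell n k (Suc t)) = EE (pw t) {0..<n} (\<lambda>w. VR f pw ell n k (Suc t) (M w))"
        unfolding Enext_def EE_def M_def s_def Let_def ..
      have "Enext f pw n t m \<gamma> (VR f pw ell n k (Suc t)) - V0 = EE (pw t) {0..<n} (\<lambda>w. VR f pw ell n k (Suc t) (M w) - V0)"
        unfolding En EE_diff EE_const[OF finite_atLeastLessThan LA(6)] ..
      also have "\<bar>\<dots>\<bar> \<le> EE (pw t) {0..<n} (\<lambda>w. \<bar>VR f pw ell n k (Suc t) (M w) - V0\<bar>)"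
        by (rule EE_abs[OF LA(5)])
      also have "\<dots> \<le> EE (pw t) {0..<n} (\<lambda>w. C / sqrt (real n) + L * supn (\<lambda>y. M w y - fhat f pw t m \<gamma> y))"
      proof (rule EE_mono[OF LA(5)])
        fix w
        have Mm: "M w \<in> Mn n" unfolding M_def by (rule emp_Mn[OF n])
        then have MD: "M w \<in> Delta" by (rule Mn_Delta)
        have "\<bar>VR f pw ell n k (Suc t) (M w) - VhatR f pw ell k (Suc t) (M w)\<bar> \<le> C / sqrt (real n)"
          using C n Mm by auto
        moreover have "\<bar>VhatR f pw ell k (Suc t) (M w) - V0\<bar> \<le> L * supn (\<lambda>y. M w y - fhat f pw t m \<gamma> y)"
          unfolding V0_def using L MD fD by auto
        ultimately show "\<bar>VR f pw ell n k (Suc t) (M w) - V0\<bar> \<le> C / sqrt (real n) + L * supn (\<lambda>y. M w y - fhat f pw t m \<gamma> y)"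
          by linarith
      qed
      also have "\<dots> = C / sqrt (real n) + L * EE (pw t) {0..<n} (\<lambda>w. supn (\<lambda>y. M w y - fhat f pw t m \<gamma> y))"
        unfolding EE_add EE_cmult EE_const[OF finite_atLeastLessThan LA(6)] ..
      also have "\<dots> \<le> C / sqrt (real n) + L * (real CARD('x) / sqrt (real n))"
        using mult_left_mono[OF E_supn[of pw t n m f \<gamma>, OF LA(5,6) n m] L0] unfolding M_def s_def by simp
      also have "\<dots> = C' / sqrt (real n)" unfolding C'_def by (simp add: add_divide_distrib)
      finally have "\<bar>Enext f pw n t m \<gamma> (VR f pw ell n k (Suc t)) - V0\<bar> \<le> C' / sqrt (real n)" .
      then show "\<bar>(chat ell t m \<gamma> + Enext f pw n t m \<gamma> (VR f pw ell n k (Suc t))) -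
             (chat ell t m \<gamma> + VhatR f pw ell k (Suc t) (fhat f pw t m \<gamma>))\<bar> \<le> C' / sqrt (real n)"
        unfolding V0_def by simp
    qed
  qed
qed

end


theorem lemma6:
  fixes T :: nat
    and f :: "nat \<Rightarrow> 'x::finite \<Rightarrow> 'u::finite \<Rightarrow> 'w::finite \<Rightarrow> ('x \<Rightarrow> real) \<Rightarrow> 'x"
    and pw :: "nat \<Rightarrow> 'w \<Rightarrow> real"
    and ell :: "nat \<Rightarrow> 'x \<Rightarrow> 'u \<Rightarrow> ('x \<Rightarrow> real) \<Rightarrow> real"
    and K1 K2 :: "nat \<Rightarrow> real"
  assumes noise: "\<forall>t\<in>{1..T}. (\<forall>w. 0 \<le> pw t w) \<and> (\<Sum>w\<in>UNIV. pw t w) = 1"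
    and cost_nonneg: "\<forall>t\<in>{1..T}. \<forall>x u z. z \<in> Ispace \<longrightarrow> 0 \<le> ell t x u z"
    and Lip: "\<forall>t\<in>{1..T}. 0 < K1 t \<and> 0 < K2 t \<and>
       (\<forall>x y u z1 z2. z1 \<in> Ispace \<longrightarrow> z2 \<in> Ispace \<longrightarrow>
          \<bar>Ptrans f pw t x u z1 y - Ptrans f pw t x u z2 y\<bar> \<le> K1 t * supn (\<lambda>v. z1 v - z2 v)) \<and>
       (\<forall>x u z1 z2. z1 \<in> Ispace \<longrightarrow> z2 \<in> Ispace \<longrightarrow>
          \<bar>ell t x u z1 - ell t x u z2\<bar> \<le> K2 t * supn (\<lambda>v. z1 v - z2 v))"
  shows "\<forall>t\<in>{1..T}. \<exists>K5>0. \<exists>C. \<forall>n::nat. 0 < n \<longrightarrow>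
           (\<forall>m\<in>Mn n. \<forall>z\<in>Delta.
              \<bar>Vmf f pw ell T n t m - Vhat f pw ell T t z\<bar>
                \<le> K5 * supn (\<lambda>x. m x - z x) + C / sqrt (real n))"
proof (intro ballI)
  fix t assume t: "t \<in> {1..T}"
  have h1: "1 \<le> t" and h2: "t + (Suc T - t) \<le> Suc T" using t by auto
  obtain L where L0: "0 \<le> L" and L: "\<forall>z1\<in>Delta. \<forall>z2\<in>Delta.
      \<bar>VhatR f pw ell (Suc T - t) t z1 - VhatR f pw ell (Suc T - t) t z2\<bar> \<le> L * supn (\<lambda>v. z1 v - z2 v)"
    using VhatR_lip[OF noise cost_nonneg Lip h1 h2] by blast
  obtain C where C: "\<forall>n. 0 < n \<longrightarrow> (\<forall>m\<in>Mn n. \<bar>VR f pw ell n (Suc T - t) t m - VhatR f pw ell (Suc T - t) t m\<bar> \<le> C / sqrt (real n))"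
    using VR_gap[OF noise cost_nonneg Lip h1 h2] by blast
  have main: "\<bar>Vmf f pw ell T n t m - Vhat f pw ell T t z\<bar> \<le> (L + 1) * supn (\<lambda>x. m x - z x) + C / sqrt (real n)"
    if n: "0 < n" and m: "m \<in> Mn n" and z: "z \<in> Delta" for n :: nat and m z :: "'x \<Rightarrow> real"
  proof -
    have a: "\<bar>VR f pw ell n (Suc T - t) t m - VhatR f pw ell (Suc T - t) t m\<bar> \<le> C / sqrt (real n)"
      using C n m by auto
    have b: "\<bar>VhatR f pw ell (Suc T - t) t m - VhatR f pw ell (Suc T - t) t z\<bar> \<le> L * supn (\<lambda>x. m x - z x)"
      using L Mn_Delta[OF m] z by auto
    have c: "L * supn (\<lambda>x. m x - z x) \<le> (L + 1) * supn (\<lambda>x. m x - z x)"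
      using supn_nonneg[of "\<lambda>x. m x - z x"] by (simp add: algebra_simps)
    show ?thesis
      unfolding Vmf_def Vhat_def using a b c by linarith
  qed
  have "0 < L + 1" using L0 by simp
  then show "\<exists>K5>0. \<exists>C. \<forall>n::nat. 0 < n \<longrightarrow>
           (\<forall>m\<in>Mn n. \<forall>z\<in>Delta.
              \<bar>Vmf f pw ell T n t m - Vhat f pw ell T t z\<bar>
                \<le> K5 * supn (\<lambda>x. m x - z x) + C / sqrt (real n))"
    using main by blast
qed

end
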